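(* Let $h$ be a triangle center function. If the locus of $X_h$ over the 3-periodics of $E$ is an ellipse, then this ellipse is centered at the origin (the center of $E$) and its axes lie along the coordinate axes (the axes of $E$).
   Context: Fix real numbers $a>b>0$ and let $E$ be the ellipse $x^2/a^2+y^2/b^2=1$ (the elliptic billiard). A 3-periodic is a non-degenerate triangle $P_1P_2P_3$ with all vertices on $E$ such that at each vertex $P_j$ the normal line to $E$ at $P_j$ bisects the interior angle of the triangle at $P_j$. For a triangle $P_1P_2P_3$ let $s_1=|P_2P_3|$, $s_2=|P_3P_1|$, $s_3=|P_1P_2|$. A triangle center function is a function $h(x,y,z)$ that is homogeneous and bisymmetric ($h(x,y,z)=h(x,z,y)$). The associated triangle center is $X_h=\dfrac{p s_1P_1+q s_2P_2+r s_3P_3}{p s_1+q s_2+r s_3}$ with $p=h(s_1,s_2,s_3)$, $q=h(s_2,s_3,s_1)$, $r=h(s_3,s_1,s_2)$, defined when the denominator is nonzero. The locus of $X_h$ is the set of points $X_h(T)$ as $T$ ranges over all 3-periodics for which $X_h(T)$ is defined. *)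

theory Defs
  imports "HOL-Analysis.Analysis"
begin

type_synonym pt = "real \<times> real"

definition cross2 :: "pt \<Rightarrow> pt \<Rightarrow> real" where
  "cross2 u v = fst u * snd v - snd u * fst v"

definition len :: "pt \<Rightarrow> real" where
  "len u = sqrt ((fst u)\<^sup>2 + (snd u)\<^sup>2)"

definition on_ellipse :: "real \<Rightarrow> real \<Rightarrow> pt \<Rightarrow> bool" where
  "on_ellipse a b P \<longleftrightarrow> (fst P)\<^sup>2 / a\<^sup>2 + (snd P)\<^sup>2 / b\<^sup>2 = 1"

text \<open>Normal vector to the ellipse at P (gradient of the defining function, up to factor 2).\<close>
definition ell_normal :: "real \<Rightarrow> real \<Rightarrow> pt \<Rightarrow> pt" where
  "ell_normal a b P = (fst P / a\<^sup>2, snd P / b\<^sup>2)"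

text \<open>The normal line at Pj bisects the interior angle of the triangle at Pj, whose
  other vertices are Q1 and Q2: the interior bisector direction
  (Q1-Pj)/|Q1-Pj| + (Q2-Pj)/|Q2-Pj| is parallel to the normal.\<close>
definition normal_bisects :: "real \<Rightarrow> real \<Rightarrow> pt \<Rightarrow> pt \<Rightarrow> pt \<Rightarrow> bool" where
  "normal_bisects a b Pj Q1 Q2 \<longleftrightarrow>
     cross2 (ell_normal a b Pj)
       ((1 / len (Q1 - Pj)) *\<^sub>R (Q1 - Pj) + (1 / len (Q2 - Pj)) *\<^sub>R (Q2 - Pj)) = 0"

definition nondegenerate :: "pt \<Rightarrow> pt \<Rightarrow> pt \<Rightarrow> bool" where
  "nondegenerate P1 P2 P3 \<longleftrightarrow> cross2 (P2 - P1) (P3 - P1) \<noteq> 0"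

definition three_periodic :: "real \<Rightarrow> real \<Rightarrow> pt \<Rightarrow> pt \<Rightarrow> pt \<Rightarrow> bool" where
  "three_periodic a b P1 P2 P3 \<longleftrightarrow>
     nondegenerate P1 P2 P3 \<and>
     on_ellipse a b P1 \<and> on_ellipse a b P2 \<and> on_ellipse a b P3 \<and>
     normal_bisects a b P1 P2 P3 \<and> normal_bisects a b P2 P3 P1 \<and>
     normal_bisects a b P3 P1 P2"

definition triangle_center_function :: "(real \<Rightarrow> real \<Rightarrow> real \<Rightarrow> real) \<Rightarrow> bool" where
  "triangle_center_function h \<longleftrightarrow>
     (\<exists>k::real. \<forall>t>0. \<forall>x y z. h (t*x) (t*y) (t*z) = t powr k * h x y z) \<and>
     (\<forall>x y z. h x y z = h x z y)"

definition center_denom :: "(real \<Rightarrow> real \<Rightarrow> real \<Rightarrow> real) \<Rightarrow> pt \<Rightarrow> pt \<Rightarrow> pt \<Rightarrow> real" where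
  "center_denom h P1 P2 P3 =
     (let s1 = len (P3 - P2); s2 = len (P1 - P3); s3 = len (P2 - P1)
      in h s1 s2 s3 * s1 + h s2 s3 s1 * s2 + h s3 s1 s2 * s3)"

definition center_point :: "(real \<Rightarrow> real \<Rightarrow> real \<Rightarrow> real) \<Rightarrow> pt \<Rightarrow> pt \<Rightarrow> pt \<Rightarrow> pt" where
  "center_point h P1 P2 P3 =
     (let s1 = len (P3 - P2); s2 = len (P1 - P3); s3 = len (P2 - P1);
          p = h s1 s2 s3; q = h s2 s3 s1; r = h s3 s1 s2
      in (1 / (p * s1 + q * s2 + r * s3)) *\<^sub>R
           ((p * s1) *\<^sub>R P1 + (q * s2) *\<^sub>R P2 + (r * s3) *\<^sub>R P3))"

definition center_locus :: "real \<Rightarrow> real \<Rightarrow> (real \<Rightarrow> real \<Rightarrow> real \<Rightarrow> real) \<Rightarrow> pt set" where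
  "center_locus a b h =
     {X. \<exists>P1 P2 P3. three_periodic a b P1 P2 P3 \<and> center_denom h P1 P2 P3 \<noteq> 0 \<and>
                    X = center_point h P1 P2 P3}"

definition is_ellipse :: "pt set \<Rightarrow> bool" where
  "is_ellipse S \<longleftrightarrow> (\<exists>c::pt. \<exists>\<theta> p q::real. p > 0 \<and> q > 0 \<and>
     S = {c + (cos \<theta> * (p * cos t) - sin \<theta> * (q * sin t),
               sin \<theta> * (p * cos t) + cos \<theta> * (q * sin t)) | t. True})"

end

theory Submission
  imports Defs
begin

definition rx :: "pt \<Rightarrow> pt" where "rx P = (- fst P, snd P)"
definition ry :: "pt \<Rightarrow> pt" where "ry P = (fst P, - snd P)"

lemma rx_diff: "rx u - rx v = rx (u - v)" by (simp add: rx_def)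
lemma ry_diff: "ry u - ry v = ry (u - v)" by (simp add: ry_def)
lemma len_rx: "len (rx u) = len u" by (simp add: rx_def len_def)
lemma len_ry: "len (ry u) = len u" by (simp add: ry_def len_def)
lemma cross_rx: "cross2 (rx u) (rx v) = - cross2 u v" by (simp add: rx_def cross2_def)
lemma cross_ry: "cross2 (ry u) (ry v) = - cross2 u v" by (simp add: ry_def cross2_def)
lemma lin_rx: "rx (c *\<^sub>R u + d *\<^sub>R v) = c *\<^sub>R rx u + d *\<^sub>R rx v" by (simp add: rx_def)
lemma lin_ry: "ry (c *\<^sub>R u + d *\<^sub>R v) = c *\<^sub>R ry u + d *\<^sub>R ry v" by (simp add: ry_def)
lemma lin3_rx: "rx (k *\<^sub>R (c *\<^sub>R u + d *\<^sub>R v + e *\<^sub>R w)) = k *\<^sub>R (c *\<^sub>R rx u + d *\<^sub>R rx v + e *\<^sub>R rx w)"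
  by (simp add: rx_def algebra_simps)
lemma lin3_ry: "ry (k *\<^sub>R (c *\<^sub>R u + d *\<^sub>R v + e *\<^sub>R w)) = k *\<^sub>R (c *\<^sub>R ry u + d *\<^sub>R ry v + e *\<^sub>R ry w)"
  by (simp add: ry_def algebra_simps)
lemma norm_rx: "ell_normal a b (rx P) = rx (ell_normal a b P)" by (simp add: rx_def ell_normal_def)
lemma norm_ry: "ell_normal a b (ry P) = ry (ell_normal a b P)" by (simp add: ry_def ell_normal_def)
lemma ell_rx: "on_ellipse a b (rx P) = on_ellipse a b P" by (simp add: rx_def on_ellipse_def)
lemma ell_ry: "on_ellipse a b (ry P) = on_ellipse a b P" by (simp add: ry_def on_ellipse_def)

lemma nb_rx: "normal_bisects a b (rx P) (rx Q) (rx R) = normal_bisects a b P Q R"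
  unfolding normal_bisects_def rx_diff len_rx norm_rx lin_rx[symmetric] cross_rx by simp
lemma nb_ry: "normal_bisects a b (ry P) (ry Q) (ry R) = normal_bisects a b P Q R"
  unfolding normal_bisects_def ry_diff len_ry norm_ry lin_ry[symmetric] cross_ry by simp

lemma tp_rx: "three_periodic a b (rx P) (rx Q) (rx R) = three_periodic a b P Q R"
  unfolding three_periodic_def nondegenerate_def rx_diff cross_rx nb_rx ell_rx by simp
lemma tp_ry: "three_periodic a b (ry P) (ry Q) (ry R) = three_periodic a b P Q R"
  unfolding three_periodic_def nondegenerate_def ry_diff cross_ry nb_ry ell_ry by simp

lemma locus_rx: "X \<in> center_locus a b h \<Longrightarrow> rx X \<in> center_locus a b h"
proof -
  assume "X \<in> center_locus a b h"
  then obtain P1 P2 P3 where H: "three_periodic a b P1 P2 P3" "center_denom h P1 P2 P3 \<noteq> 0"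
    "X = center_point h P1 P2 P3" unfolding center_locus_def by blast
  have "three_periodic a b (rx P1) (rx P2) (rx P3)" using H tp_rx by simp
  moreover have "center_denom h (rx P1) (rx P2) (rx P3) \<noteq> 0"
    using H(2) unfolding center_denom_def rx_diff len_rx .
  moreover have "rx X = center_point h (rx P1) (rx P2) (rx P3)"
    unfolding H(3) center_point_def rx_diff len_rx Let_def lin3_rx ..
  ultimately show ?thesis unfolding center_locus_def by blast
qed

lemma locus_ry: "X \<in> center_locus a b h \<Longrightarrow> ry X \<in> center_locus a b h"
proof -
  assume "X \<in> center_locus a b h"
  then obtain P1 P2 P3 where H: "three_periodic a b P1 P2 P3" "center_denom h P1 P2 P3 \<noteq> 0"
    "X = center_point h P1 P2 P3" unfolding center_locus_def by blast
  have "three_periodic a b (ry P1) (ry P2) (ry P3)" using H tp_ry by simp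
  moreover have "center_denom h (ry P1) (ry P2) (ry P3) \<noteq> 0"
    using H(2) unfolding center_denom_def ry_diff len_ry .
  moreover have "ry X = center_point h (ry P1) (ry P2) (ry P3)"
    unfolding H(3) center_point_def ry_diff len_ry Let_def lin3_ry ..
  ultimately show ?thesis unfolding center_locus_def by blast
qed

lemma std_ell1:
  fixes A B l m :: real
  assumes "A > 0" "B > 0" "l\<^sup>2 = 1" "m\<^sup>2 = 1"
  shows "{(l * (A * cos t), m * (B * sin t)) | t. True} = {(x, y). x\<^sup>2 / A\<^sup>2 + y\<^sup>2 / B\<^sup>2 = 1}"
proof (intro set_eqI iffI)
  fix z assume "z \<in> {(l * (A * cos t), m * (B * sin t)) | t. True}"
  then obtain t where "z = (l * (A * cos t), m * (B * sin t))" by blast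
  then show "z \<in> {(x, y). x\<^sup>2 / A\<^sup>2 + y\<^sup>2 / B\<^sup>2 = 1}"
    using assms by (simp add: power_mult_distrib)
next
  fix z assume "z \<in> {(x, y). x\<^sup>2 / A\<^sup>2 + y\<^sup>2 / B\<^sup>2 = 1}"
  then obtain x y where z: "z = (x, y)" "x\<^sup>2 / A\<^sup>2 + y\<^sup>2 / B\<^sup>2 = 1" by blast
  have "(l * x / A)\<^sup>2 + (m * y / B)\<^sup>2 = 1" using z(2) assms
    by (simp add: power_mult_distrib power_divide)
  then obtain t where t: "l * x / A = cos t" "m * y / B = sin t" by (rule sincos_total_2pi)
  have lx: "l * (l * x) = x" using assms(3) by (simp add: power2_eq_square algebra_simps)
  have my: "m * (m * y) = y" using assms(4) by (simp add: power2_eq_square algebra_simps)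
  have "x = l * (A * cos t)" using t(1) lx assms(1) by (auto simp: field_simps)
  moreover have "y = m * (B * sin t)" using t(2) my assms(2) by (auto simp: field_simps)
  ultimately show "z \<in> {(l * (A * cos t), m * (B * sin t)) | t. True}" using z by blast
qed

lemma std_ell2:
  fixes A B l m :: real
  assumes "A > 0" "B > 0" "l\<^sup>2 = 1" "m\<^sup>2 = 1"
  shows "{(l * (A * sin t), m * (B * cos t)) | t. True} = {(x, y). x\<^sup>2 / A\<^sup>2 + y\<^sup>2 / B\<^sup>2 = 1}"
proof (intro set_eqI iffI)
  fix z assume "z \<in> {(l * (A * sin t), m * (B * cos t)) | t. True}"
  then obtain t where "z = (l * (A * sin t), m * (B * cos t))" by blast
  then show "z \<in> {(x, y). x\<^sup>2 / A\<^sup>2 + y\<^sup>2 / B\<^sup>2 = 1}"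
    using assms by (simp add: power_mult_distrib)
next
  fix z assume "z \<in> {(x, y). x\<^sup>2 / A\<^sup>2 + y\<^sup>2 / B\<^sup>2 = 1}"
  then obtain x y where z: "z = (x, y)" "x\<^sup>2 / A\<^sup>2 + y\<^sup>2 / B\<^sup>2 = 1" by blast
  have "(m * y / B)\<^sup>2 + (l * x / A)\<^sup>2 = 1" using z(2) assms
    by (simp add: power_mult_distrib power_divide)
  then obtain t where t: "m * y / B = cos t" "l * x / A = sin t" by (rule sincos_total_2pi)
  have lx: "l * (l * x) = x" using assms(3) by (simp add: power2_eq_square algebra_simps)
  have my: "m * (m * y) = y" using assms(4) by (simp add: power2_eq_square algebra_simps)
  have "x = l * (A * sin t)" using t(2) lx assms(1) by (auto simp: field_simps)
  moreover have "y = m * (B * cos t)" using t(1) my assms(2) by (auto simp: field_simps)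
  ultimately show "z \<in> {(l * (A * sin t), m * (B * cos t)) | t. True}" using z by blast
qed

lemma circ:
  fixes p th :: real
  assumes "p > 0"
  shows "{(cos th * (p * cos t) - sin th * (p * sin t), sin th * (p * cos t) + cos th * (p * sin t)) | t. True}
     = {(x, y). x\<^sup>2 / p\<^sup>2 + y\<^sup>2 / p\<^sup>2 = 1}"
proof -
  have "{(cos th * (p * cos t) - sin th * (p * sin t), sin th * (p * cos t) + cos th * (p * sin t)) | t. True}
     = {(1 * (p * cos t), 1 * (p * sin t)) | t. True}"
  proof (intro set_eqI iffI)
    fix z assume "z \<in> {(cos th * (p * cos t) - sin th * (p * sin t), sin th * (p * cos t) + cos th * (p * sin t)) | t. True}"
    then obtain t where "z = (cos th * (p * cos t) - sin th * (p * sin t), sin th * (p * cos t) + cos th * (p * sin t))" by blast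
    then have "z = (1 * (p * cos (th + t)), 1 * (p * sin (th + t)))"
      by (simp add: cos_add sin_add algebra_simps)
    then show "z \<in> {(1 * (p * cos t), 1 * (p * sin t)) | t. True}" by blast
  next
    fix z assume "z \<in> {(1 * (p * cos t), 1 * (p * sin t)) | t. True}"
    then obtain t where "z = (1 * (p * cos t), 1 * (p * sin t))" by blast
    then have "z = (cos th * (p * cos (t - th)) - sin th * (p * sin (t - th)), sin th * (p * cos (t - th)) + cos th * (p * sin (t - th)))"
    proof -
      have c: "cos t = cos th * cos (t - th) - sin th * sin (t - th)"
        using cos_add[of th "t - th"] by simp
      have s: "sin t = sin th * cos (t - th) + cos th * sin (t - th)"
        using sin_add[of th "t - th"] by simp
      show ?thesis using \<open>z = _\<close> unfolding c s by (simp add: algebra_simps)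
    qed
    then show "z \<in> {(cos th * (p * cos t) - sin th * (p * sin t), sin th * (p * cos t) + cos th * (p * sin t)) | t. True}" by blast
  qed
  also have "\<dots> = {(x, y). x\<^sup>2 / p\<^sup>2 + y\<^sup>2 / p\<^sup>2 = 1}" by (rule std_ell1) (use assms in auto)
  finally show ?thesis .
qed

lemma arch_zero:
  fixes a d K :: real
  assumes "\<forall>n::nat. \<bar>a + real n * d\<bar> \<le> K"
  shows "d = 0"
proof (rule ccontr)
  assume "d \<noteq> 0"
  then have "\<bar>d\<bar> > 0" by simp
  then obtain n where n: "K + \<bar>a\<bar> < real n * \<bar>d\<bar>" using reals_Archimedean3 by blast
  have "real n * \<bar>d\<bar> = \<bar>real n * d\<bar>" by (simp add: abs_mult)
  also have "\<dots> \<le> \<bar>a + real n * d\<bar> + \<bar>a\<bar>" by linarith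
  also have "\<dots> \<le> K + \<bar>a\<bar>" using assms by simp
  finally show False using n by simp
qed


lemma final_cases:
  fixes p q th :: real
  assumes "p > 0" "q > 0" "cos th = 0 \<or> sin th = 0"
  shows "\<exists>\<alpha> \<beta>::real. \<alpha> > 0 \<and> \<beta> > 0 \<and>
    {(cos th * (p * cos t) - sin th * (q * sin t), sin th * (p * cos t) + cos th * (q * sin t)) | t. True}
     = {(x, y). x\<^sup>2 / \<alpha>\<^sup>2 + y\<^sup>2 / \<beta>\<^sup>2 = 1}"
  using assms(3)
proof
  assume C: "cos th = 0"
  then have S2: "(sin th)\<^sup>2 = 1" using sin_cos_squared_add[of th] by simp
  have "{(cos th * (p * cos t) - sin th * (q * sin t), sin th * (p * cos t) + cos th * (q * sin t)) | t. True}
     = {((- sin th) * (q * sin t), sin th * (p * cos t)) | t. True}" using C by simp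
  also have "\<dots> = {(x, y). x\<^sup>2 / q\<^sup>2 + y\<^sup>2 / p\<^sup>2 = 1}"
    by (rule std_ell2) (use assms S2 in auto)
  finally show ?thesis using assms by blast
next
  assume C: "sin th = 0"
  then have S2: "(cos th)\<^sup>2 = 1" using sin_cos_squared_add[of th] by simp
  have "{(cos th * (p * cos t) - sin th * (q * sin t), sin th * (p * cos t) + cos th * (q * sin t)) | t. True}
     = {(cos th * (p * cos t), cos th * (q * sin t)) | t. True}" using C by simp
  also have "\<dots> = {(x, y). x\<^sup>2 / p\<^sup>2 + y\<^sup>2 / q\<^sup>2 = 1}"
    by (rule std_ell1) (use assms S2 in auto)
  finally show ?thesis using assms by blast
qed

lemma norm_id:
  fixes C Sn p q c s :: real
  assumes "C\<^sup>2 + Sn\<^sup>2 = 1"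
  shows "(C * (p * c) - Sn * (q * s))\<^sup>2 + (Sn * (p * c) + C * (q * s))\<^sup>2 = p\<^sup>2 * c\<^sup>2 + q\<^sup>2 * s\<^sup>2"
proof -
  have "(C * (p * c) - Sn * (q * s))\<^sup>2 + (Sn * (p * c) + C * (q * s))\<^sup>2
      = (C\<^sup>2 + Sn\<^sup>2) * (p\<^sup>2 * c\<^sup>2 + q\<^sup>2 * s\<^sup>2)" by algebra
  then show ?thesis using assms by simp
qed

lemma centered:
  fixes p q th :: real and S :: "pt set"
  assumes "p > 0" "q > 0"
    and S: "S = {(cos th * (p * cos t) - sin th * (q * sin t), sin th * (p * cos t) + cos th * (q * sin t)) | t. True}"
    and sym: "\<forall>z\<in>S. rx z \<in> S"
  shows "\<exists>\<alpha> \<beta>::real. \<alpha> > 0 \<and> \<beta> > 0 \<and> S = {(x, y). x\<^sup>2 / \<alpha>\<^sup>2 + y\<^sup>2 / \<beta>\<^sup>2 = 1}"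
proof -
  define C where "C = cos th"
  define Sn where "Sn = sin th"
  have CS: "C\<^sup>2 + Sn\<^sup>2 = 1" unfolding C_def Sn_def by simp
  have "p = q \<or> p > q \<or> q > p" by linarith
  moreover have ?thesis if "p = q"
    using circ[of p th] assms that by auto
  moreover have ?thesis if pq: "p > q"
  proof -
    have "(C * p, Sn * p) \<in> S" unfolding S C_def Sn_def by (rule CollectI, rule exI[of _ 0], simp)
    then have "(- (C * p), Sn * p) \<in> S" using sym by (force simp: rx_def)
    then obtain t where e: "- (C * p) = C * (p * cos t) - Sn * (q * sin t)"
      "Sn * p = Sn * (p * cos t) + C * (q * sin t)" unfolding S C_def Sn_def by auto
    have "(- (C * p))\<^sup>2 + (Sn * p)\<^sup>2 = p\<^sup>2 * (cos t)\<^sup>2 + q\<^sup>2 * (sin t)\<^sup>2"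
      unfolding e by (rule norm_id[OF CS])
    moreover have "(- (C * p))\<^sup>2 + (Sn * p)\<^sup>2 = (C\<^sup>2 + Sn\<^sup>2) * p\<^sup>2" by algebra
    ultimately have "p\<^sup>2 = p\<^sup>2 * (cos t)\<^sup>2 + q\<^sup>2 * (sin t)\<^sup>2" using CS by simp
    moreover have "(cos t)\<^sup>2 = 1 - (sin t)\<^sup>2" by (simp add: cos_squared_eq)
    ultimately have "(sin t)\<^sup>2 * (p\<^sup>2 - q\<^sup>2) = 0" by (simp add: algebra_simps)
    moreover have "p\<^sup>2 - q\<^sup>2 > 0" using pq assms by (simp add: power_strict_mono)
    ultimately have st: "sin t = 0" by simp
    then have "(cos t)\<^sup>2 = 1" using sin_cos_squared_add[of t] by simp
    then have "cos t = 1 \<or> cos t = -1" by (simp add: power2_eq_1_iff)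
    then have "C = 0 \<or> Sn = 0" using e st assms(1) by auto
    then show ?thesis using final_cases[of p q th] assms unfolding C_def Sn_def by auto
  qed
  moreover have ?thesis if pq: "q > p"
  proof -
    have "(- (Sn * q), C * q) \<in> S" unfolding S C_def Sn_def by (rule CollectI, rule exI[of _ "pi/2"], simp)
    then have "(Sn * q, C * q) \<in> S" using sym by (force simp: rx_def)
    then obtain t where e: "Sn * q = C * (p * cos t) - Sn * (q * sin t)"
      "C * q = Sn * (p * cos t) + C * (q * sin t)" unfolding S C_def Sn_def by auto
    have "(Sn * q)\<^sup>2 + (C * q)\<^sup>2 = p\<^sup>2 * (cos t)\<^sup>2 + q\<^sup>2 * (sin t)\<^sup>2"
      unfolding e by (rule norm_id[OF CS])
    moreover have "(Sn * q)\<^sup>2 + (C * q)\<^sup>2 = (C\<^sup>2 + Sn\<^sup>2) * q\<^sup>2" by algebra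
    ultimately have "q\<^sup>2 = p\<^sup>2 * (cos t)\<^sup>2 + q\<^sup>2 * (sin t)\<^sup>2" using CS by simp
    moreover have "(sin t)\<^sup>2 = 1 - (cos t)\<^sup>2" by (simp add: sin_squared_eq)
    ultimately have "(cos t)\<^sup>2 * (q\<^sup>2 - p\<^sup>2) = 0" by (simp add: algebra_simps)
    moreover have "q\<^sup>2 - p\<^sup>2 > 0" using pq assms by (simp add: power_strict_mono)
    ultimately have st: "cos t = 0" by simp
    then have "(sin t)\<^sup>2 = 1" using sin_cos_squared_add[of t] by simp
    then have "sin t = 1 \<or> sin t = -1" by (simp add: power2_eq_1_iff)
    then have "C = 0 \<or> Sn = 0" using e st assms(2) by auto
    then show ?thesis using final_cases[of p q th] assms unfolding C_def Sn_def by auto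
  qed
  ultimately show ?thesis by blast
qed


lemma abs_bnd:
  fixes x y p :: real
  assumes "\<bar>x\<bar> \<le> 1" "\<bar>y\<bar> \<le> 1" "p \<ge> 0"
  shows "\<bar>x * (p * y)\<bar> \<le> p"
proof -
  have "\<bar>x * (p * y)\<bar> = p * (\<bar>x\<bar> * \<bar>y\<bar>)" using assms(3) by (simp add: abs_mult)
  also have "\<dots> \<le> p * 1" using assms by (intro mult_left_mono mult_le_one) auto
  finally show ?thesis by simp
qed

theorem lemma3:
  fixes a b :: real and h :: "real \<Rightarrow> real \<Rightarrow> real \<Rightarrow> real"
  assumes "a > b" and "b > 0"
    and "triangle_center_function h"
    and "is_ellipse (center_locus a b h)"
  shows "\<exists>\<alpha> \<beta>::real. \<alpha> > 0 \<and> \<beta> > 0 \<and>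
           center_locus a b h = {(x, y). x\<^sup>2 / \<alpha>\<^sup>2 + y\<^sup>2 / \<beta>\<^sup>2 = 1}"
proof -
  define S where "S = center_locus a b h"
  obtain c :: pt and th p q :: real where pq: "p > 0" "q > 0" and
    S: "S = {c + (cos th * (p * cos t) - sin th * (q * sin t),
               sin th * (p * cos t) + cos th * (q * sin t)) | t. True}"
    using assms(4) unfolding is_ellipse_def S_def by blast
  define f where "f t = c + (cos th * (p * cos t) - sin th * (q * sin t),
               sin th * (p * cos t) + cos th * (q * sin t))" for t
  have S': "S = range f" unfolding S f_def by auto
  have symx: "\<forall>z\<in>S. rx z \<in> S" unfolding S_def using locus_rx by blast
  have symy: "\<forall>z\<in>S. ry z \<in> S" unfolding S_def using locus_ry by blast
  have fpi: "f (t + pi) = (2 * fst c - fst (f t), 2 * snd c - snd (f t))" for t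
    unfolding f_def by (simp add: cos_periodic_pi sin_periodic_pi prod_eq_iff)
  have step: "(fst z + 2 * fst c, snd z + 2 * snd c) \<in> S" if "z \<in> S" for z
  proof -
    have "ry (rx z) \<in> S" using that symx symy by blast
    then obtain t where t: "ry (rx z) = f t" unfolding S' by blast
    have "f (t + pi) = (fst z + 2 * fst c, snd z + 2 * snd c)"
      unfolding fpi t[symmetric] by (simp add: rx_def ry_def)
    then show ?thesis unfolding S' by (metis rangeI)
  qed
  have iter: "(fst (f 0) + real n * (2 * fst c), snd (f 0) + real n * (2 * snd c)) \<in> S" for n :: nat
  proof (induction n)
    case 0 then show ?case unfolding S' by simp
  next
    case (Suc n) then show ?case using step[OF Suc] by (simp add: algebra_simps)
  qed
  have bnd: "\<bar>fst z - fst c\<bar> \<le> p + q \<and> \<bar>snd z - snd c\<bar> \<le> p + q" if zS: "z \<in> S" for z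
  proof -
    obtain t where z: "z = f t" using zS unfolding S' by blast
    have b1: "\<bar>cos th * (p * cos t)\<bar> \<le> p" "\<bar>sin th * (q * sin t)\<bar> \<le> q"
      "\<bar>sin th * (p * cos t)\<bar> \<le> p" "\<bar>cos th * (q * sin t)\<bar> \<le> q"
      using pq by (auto intro!: abs_bnd)
    show ?thesis unfolding z f_def using b1 by (simp add: abs_le_iff)
  qed
  have "fst c = 0"
  proof -
    have "\<forall>n::nat. \<bar>(fst (f 0) - fst c) + real n * (2 * fst c)\<bar> \<le> p + q"
      using bnd[OF iter] by (simp add: algebra_simps)
    then show ?thesis using arch_zero by fastforce
  qed
  moreover have "snd c = 0"
  proof -
    have "\<forall>n::nat. \<bar>(snd (f 0) - snd c) + real n * (2 * snd c)\<bar> \<le> p + q"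
      using bnd[OF iter] by (simp add: algebra_simps)
    then show ?thesis using arch_zero by fastforce
  qed
  ultimately have c0: "c = 0" by (simp add: prod_eq_iff)
  have "S = {(cos th * (p * cos t) - sin th * (q * sin t), sin th * (p * cos t) + cos th * (q * sin t)) | t. True}"
    unfolding S c0 by simp
  from centered[OF pq this symx] show ?thesis unfolding S_def .
qed

end
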